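(* For $n\in\mathbb{N}$ let $(U_k^{(n)})_{k\in\mathbb{N}}$ be independent random variables uniformly distributed on $\{1,\dots,n\}$, let $Y_n(m):=\log{\rm lcm}(U_1^{(n)},\dots,U_m^{(n)})$ for $m\ge1$ and $Y_n(0)=0$, and for $t\ge0$ put $$Z_n(t):=\sum_{p\le n,\ p\ \text{prime}}\log p\cdot\mathbbm{1}_{\{\max_{1\le k\le\lfloor m_nt\rfloor}\lambda_p(U_k^{(n)})\ge1\}}$$ (the maximum over an empty set being $0$). Assume $m_n\to\infty$ and $m_n=o(n)$ as $n\to\infty$. Then for every $T>0$, $$\mathbb{E}\Bigl(\sup_{t\in[0,T]}\bigl(Y_n(\lfloor m_nt\rfloor)-Z_n(t)\bigr)\Bigr)=O(m_n^{1/2}),\qquad n\to\infty.$$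
   Context: For a prime $p$ and $k\in\mathbb{N}$, $\lambda_p(k)$ is the exponent of $p$ in the prime factorization of $k$. ${\rm lcm}$ denotes least common multiple. *)

theory Defs
  imports "HOL-Probability.Probability" "HOL-Library.Landau_Symbols"
begin

text \<open>lambda_p(k): exponent of p in k, i.e. multiplicity p k.
  Y_n(j) = log lcm(U_1,...,U_j), with Y_n(0) = log (Lcm {}) = log 1 = 0.\<close>
definition lcmY :: "(nat \<Rightarrow> 'a \<Rightarrow> nat) \<Rightarrow> nat \<Rightarrow> 'a \<Rightarrow> real" where
  "lcmY U j \<omega> = ln (real (Lcm ((\<lambda>k. U k \<omega>) ` {1..j})))"

text \<open>Z_n(t) with N = floor(m_n t) steps; the max over an empty set is 0.\<close>
definition primeZ :: "nat \<Rightarrow> (nat \<Rightarrow> 'a \<Rightarrow> nat) \<Rightarrow> nat \<Rightarrow> 'a \<Rightarrow> real" where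
  "primeZ n U N \<omega> = (\<Sum>p\<in>{p. prime p \<and> p \<le> n}.
      ln (real p) * (if Max (insert 0 ((\<lambda>k. multiplicity p (U k \<omega>)) ` {1..N})) \<ge> 1 then 1 else 0))"

end

theory Submission
  imports Defs
begin
lemma central_binom_le: "(2*m+1) choose (m+1) \<le> (4::nat)^m"
proof -
  have s: "(2*m+1) choose m = (2*m+1) choose (m+1)"
    using binomial_symmetric[of m "2*m+1"] by simp
  have "(\<Sum>k\<in>{m,m+1}. (2*m+1) choose k) \<le> (\<Sum>k\<le>2*m+1. (2*m+1) choose k)"
    by (rule sum_mono2) auto
  also have "\<dots> = 2^(2*m+1)" by (rule choose_row_sum)
  finally have "2 * ((2*m+1) choose (m+1)) \<le> 2 * 4^m"
    using s by (simp add: power_mult power_add)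
  then show ?thesis by simp
qed

lemma mid_primes_dvd:
  "(\<Prod>p\<in>{p. prime p \<and> m+1 < p \<and> p \<le> 2*m+1}. p) dvd (2*m+1) choose (m+1)"
proof -
  let ?Q = "(\<Prod>p\<in>{p. prime p \<and> m+1 < p \<and> p \<le> 2*m+1}. p)"
  have sub: "{p. prime p \<and> m+1 < p \<and> p \<le> 2*m+1} \<subseteq> {m+1+1..2*m+1}" by auto
  have "?Q dvd \<Prod>{m+1+1..2*m+1}"
    by (rule prod_dvd_prod_subset[OF finite_atLeastAtMost sub])
  also have "\<Prod>{m+1+1..2*m+1} = fact (2*m+1) div fact (m+1)"
    by (rule fact_div_fact[symmetric]) simp
  also have "fact (2*m+1) = fact (m+1) * (fact m * ((2*m+1) choose (m+1)))"
    using binomial_fact_lemma[of "m+1" "2*m+1"] by (simp add: mult_ac)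
  also have "\<dots> div fact (m+1) = fact m * ((2*m+1) choose (m+1))" by simp
  finally have d: "?Q dvd fact m * ((2*m+1) choose (m+1))" .
  have "coprime ?Q (fact m)"
  proof (rule prod_coprime_left)
    fix p assume "p \<in> {p. prime p \<and> m+1 < p \<and> p \<le> 2*m+1}"
    then have "prime p" "\<not> p dvd fact m" using prime_dvd_fact_iff[of p m] by auto
    then show "coprime p (fact m)" using prime_imp_coprime by blast
  qed
  then show ?thesis using d by (simp add: coprime_dvd_mult_right_iff)
qed

lemma primorial_le: "(\<Prod>p\<in>{p. prime p \<and> p \<le> n}. p) \<le> (4::nat)^n"
proof (induction n rule: less_induct)
  case (less n)
  show ?case
  proof (cases "n \<le> 2")
    case True
    have p2: "p = 2" if "prime p" "p \<le> 2" for p :: nat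
      using prime_ge_2_nat[OF that(1)] that(2) by linarith
    have "{p. prime p \<and> p \<le> n} = (if n = 2 then {2} else {})"
    proof (cases "n = 2")
      case True then show ?thesis using p2 by auto
    next
      case False then have "n < 2" using \<open>n \<le> 2\<close> by simp
      have "\<not> prime p" if "p \<le> n" for p
        using prime_ge_2_nat[of p] that \<open>n < 2\<close> by linarith
      then show ?thesis using False by auto
    qed
    then show ?thesis by simp
  next
    case False
    show ?thesis
    proof (cases "even n")
      case True
      have np: "\<not> prime n" using True False prime_odd_nat[of n] by auto
      have "{p. prime p \<and> p \<le> n} = {p. prime p \<and> p \<le> n - 1}"
      proof (intro set_eqI iffI)
        fix p assume "p \<in> {p. prime p \<and> p \<le> n}"
        then have "prime p" "p \<le> n" "p \<noteq> n" using np by auto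
        then show "p \<in> {p. prime p \<and> p \<le> n - 1}" by simp
      qed auto
      then have "(\<Prod>p\<in>{p. prime p \<and> p \<le> n}. p) \<le> 4^(n-1)" using less[of "n-1"] False by simp
      also have "\<dots> \<le> 4^n" by (rule power_increasing) auto
      finally show ?thesis .
    next
      case odd: False
      then obtain m where n: "n = 2*m+1" using oddE by blast
      have m1: "m \<ge> 1" using False n by simp
      have split: "{p. prime p \<and> p \<le> n} = {p. prime p \<and> p \<le> m+1} \<union> {p. prime p \<and> m+1 < p \<and> p \<le> 2*m+1}"
        using n by (auto simp del: One_nat_def)
      have "(\<Prod>p\<in>{p. prime p \<and> p \<le> n}. p) = (\<Prod>p\<in>{p. prime p \<and> p \<le> m+1}. p) * (\<Prod>p\<in>{p. prime p \<and> m+1 < p \<and> p \<le> 2*m+1}. p)"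
        unfolding split by (rule prod.union_disjoint) auto
      also have "\<dots> \<le> 4^(m+1) * 4^m"
      proof (rule mult_le_mono)
        show "(\<Prod>p\<in>{p. prime p \<and> p \<le> m+1}. p) \<le> 4^(m+1)" using less[of "m+1"] n m1 by simp
        have "(\<Prod>p\<in>{p. prime p \<and> m+1 < p \<and> p \<le> 2*m+1}. p) \<le> (2*m+1) choose (m+1)"
          by (rule dvd_imp_le[OF mid_primes_dvd]) (simp add: zero_less_binomial)
        then show "(\<Prod>p\<in>{p. prime p \<and> m+1 < p \<and> p \<le> 2*m+1}. p) \<le> 4^m" by (rule order_trans[OF _ central_binom_le])
      qed
      also have "\<dots> = 4^(m+1+m)" by (rule power_add[symmetric])
      also have "(4::nat)^(m+1+m) = 4^n" using n by (simp add: mult_2)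
      finally show ?thesis .
    qed
  qed
qed

lemma theta_le: "(\<Sum>p\<in>{p. prime p \<and> p \<le> n}. ln (real p)) \<le> real n * ln 4"
proof -
  have "(\<Sum>p\<in>{p. prime p \<and> p \<le> n}. ln (real p)) = ln (real (\<Prod>p\<in>{p. prime p \<and> p \<le> n}. p))"
    by (subst ln_prod[symmetric]) (auto simp: prime_gt_0_nat)
  also have "\<dots> \<le> ln (real ((4::nat)^n))"
  proof (subst ln_le_cancel_iff)
    show "0 < real (\<Prod>p\<in>{p. prime p \<and> p \<le> n}. p)" by (auto intro!: prod_pos simp: prime_gt_0_nat)
    show "0 < real ((4::nat)^n)" by simp
    show "real (\<Prod>p\<in>{p. prime p \<and> p \<le> n}. p) \<le> real ((4::nat)^n)"
      using primorial_le[of n] by (simp only: of_nat_le_iff)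
  qed
  also have "\<dots> = real n * ln 4" by (simp add: ln_realpow)
  finally show ?thesis .
qed

lemma abel_bound:
  fixes a g :: "nat \<Rightarrow> real"
  assumes "\<And>d. 0 \<le> a d" "\<And>x. x \<le> n \<Longrightarrow> (\<Sum>d=1..x. a d) \<le> C * real x"
    "\<And>d. d \<in> {1..n} \<Longrightarrow> 0 \<le> g d" "\<And>d e. 1 \<le> d \<Longrightarrow> d \<le> e \<Longrightarrow> e \<le> n \<Longrightarrow> g e \<le> g d"
  shows "(\<Sum>d=1..n. a d * g d) \<le> C * (\<Sum>d=1..n. g d)"
  using assms
proof (induction n arbitrary: g)
  case 0 then show ?case by simp
next
  case (Suc n)
  define c where "c = g (Suc n)"
  define h where "h = (\<lambda>d. g d - c)"
  have c0: "0 \<le> c" unfolding c_def using Suc.prems(3)[of "Suc n"] by simp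
  have IH: "(\<Sum>d=1..n. a d * h d) \<le> C * (\<Sum>d=1..n. h d)"
  proof (rule Suc.IH)
    show "0 \<le> a d" for d by (rule Suc.prems(1))
    show "(\<Sum>d=1..x. a d) \<le> C * real x" if "x \<le> n" for x using Suc.prems(2) that by simp
    show "0 \<le> h d" if "d \<in> {1..n}" for d
      using Suc.prems(4)[of d "Suc n"] that unfolding h_def c_def by simp
    show "h e \<le> h d" if "1 \<le> d" "d \<le> e" "e \<le> n" for d e
      using Suc.prems(4)[of d e] that unfolding h_def by simp
  qed
  have A: "(\<Sum>d=1..Suc n. a d) \<le> C * real (Suc n)" by (rule Suc.prems(2)) simp
  have "(\<Sum>d=1..Suc n. a d * g d) = (\<Sum>d=1..n. a d * h d) + c * (\<Sum>d=1..Suc n. a d)"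
    unfolding h_def by (simp add: sum_distrib_left algebra_simps sum.distrib sum_subtractf c_def)
  also have "\<dots> \<le> C * (\<Sum>d=1..n. h d) + c * (C * real (Suc n))"
    using IH A c0 by (intro add_mono mult_left_mono) auto
  also have "\<dots> = C * (\<Sum>d=1..Suc n. g d)"
    unfolding h_def by (simp add: sum_subtractf algebra_simps c_def)
  finally show ?case .
qed

lemma prime_sum_bound:
  fixes g :: "nat \<Rightarrow> real"
  assumes "\<And>d. d \<in> {1..n} \<Longrightarrow> 0 \<le> g d" "\<And>d e. 1 \<le> d \<Longrightarrow> d \<le> e \<Longrightarrow> e \<le> n \<Longrightarrow> g e \<le> g d"
  shows "(\<Sum>p\<in>{p. prime p \<and> p \<le> n}. ln (real p) * g p) \<le> ln 4 * (\<Sum>d=1..n. g d)"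
proof -
  define a where "a = (\<lambda>d. if prime d then ln (real d) else 0)"
  have eq: "{d \<in> {1..x}. prime d} = {p. prime p \<and> p \<le> x}" for x :: nat
    using prime_ge_1_nat by auto
  have sa: "(\<Sum>d=1..x. a d * f d) = (\<Sum>p\<in>{p. prime p \<and> p \<le> x}. ln (real p) * f p)" for x :: nat and f :: "nat \<Rightarrow> real"
  proof -
    have "(\<Sum>d=1..x. a d * f d) = (\<Sum>d=1..x. if prime d then ln (real d) * f d else 0)"
      unfolding a_def by (intro sum.cong) auto
    also have "\<dots> = (\<Sum>d\<in>{d \<in> {1..x}. prime d}. ln (real d) * f d)"
      by (rule sum.inter_filter[symmetric]) simp
    finally show ?thesis unfolding eq .
  qed
  have "(\<Sum>d=1..n. a d * g d) \<le> ln 4 * (\<Sum>d=1..n. g d)"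
  proof (rule abel_bound)
    show "0 \<le> a d" for d unfolding a_def using prime_ge_1_nat by auto
    show "(\<Sum>d=1..x. a d) \<le> ln 4 * real x" for x
      using sa[where x=x and f="\<lambda>_. 1"] theta_le[of x] by (simp add: mult.commute)
  qed (use assms in auto)
  then show ?thesis using sa[where x=n and f=g] by simp
qed

lemma telescope_sq:
  assumes "1 \<le> s" "s \<le> n"
  shows "(\<Sum>d\<in>{s<..n}. 1 / (real d * (real d - 1))) = 1 / real s - 1 / real n"
  using assms(2)
proof (induction n rule: dec_induct)
  case base then show ?case by simp
next
  case (step n)
  have n0: "0 < real n" using step(1) assms(1) by simp
  have "{s<..Suc n} = insert (Suc n) {s<..n}" using step(1) by auto
  then have "(\<Sum>d\<in>{s<..Suc n}. 1 / (real d * (real d - 1))) = 1 / (real (Suc n) * (real (Suc n) - 1)) + (\<Sum>d\<in>{s<..n}. 1 / (real d * (real d - 1)))"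
    by simp
  also have "1 / (real (Suc n) * (real (Suc n) - 1)) = 1 / real n - 1 / real (Suc n)"
    using n0 by (simp add: field_simps)
  finally show ?case using step(3) by simp
qed

lemma sum_min_sq:
  fixes N :: real
  assumes "0 \<le> N"
  shows "(\<Sum>d=1..n. min 1 (N / real d ^ 2)) \<le> 2 * sqrt N + 1"
proof -
  define s where "s = nat \<lfloor>sqrt N\<rfloor> + 1"
  have s1: "1 \<le> s" unfolding s_def by simp
  have fl: "real (nat \<lfloor>sqrt N\<rfloor>) = of_int \<lfloor>sqrt N\<rfloor>" using assms by simp
  have sN: "sqrt N < real s" "real s \<le> sqrt N + 1" unfolding s_def using fl
    by (simp_all add: add.commute) linarith+
  have Ns: "N / real s \<le> sqrt N"
  proof (cases "N = 0")
    case False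
    then have "0 < sqrt N" using assms by simp
    have "N / real s \<le> N / sqrt N"
      using \<open>0 < sqrt N\<close> sN assms s1 by (intro divide_left_mono) (auto intro!: mult_pos_pos)
    also have "\<dots> = sqrt N" using \<open>0 < sqrt N\<close> assms by (metis real_div_sqrt)
    finally show ?thesis .
  qed simp
  show ?thesis
  proof (cases "n \<le> s")
    case True
    have "(\<Sum>d=1..n. min 1 (N / real d ^ 2)) \<le> (\<Sum>d=1..n. 1)" by (intro sum_mono) simp
    also have "\<dots> = real n" by simp
    also have "\<dots> \<le> 2 * sqrt N + 1" using True sN by (smt (verit) of_nat_le_iff real_sqrt_ge_zero assms)
    finally show ?thesis .
  next
    case False
    have split: "{1..n} = {1..s} \<union> {s<..n}" using False by auto
    have "(\<Sum>d=1..n. min 1 (N / real d ^ 2)) = (\<Sum>d=1..s. min 1 (N / real d ^ 2)) + (\<Sum>d\<in>{s<..n}. min 1 (N / real d ^ 2))"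
      unfolding split by (rule sum.union_disjoint) auto
    also have "\<dots> \<le> (\<Sum>d=1..s. 1) + (\<Sum>d\<in>{s<..n}. N * (1 / (real d * (real d - 1))))"
    proof (intro add_mono sum_mono)
      fix d assume d: "d \<in> {s<..n}"
      then have "1 < real d" using s1 by simp
      then have "real d * (real d - 1) \<le> real d ^ 2" by (simp add: power2_eq_square algebra_simps)
      moreover have "0 < real d * (real d - 1)" using \<open>1 < real d\<close> by simp
      ultimately have "N / real d ^ 2 \<le> N / (real d * (real d - 1))"
        using assms \<open>1 < real d\<close> by (intro divide_left_mono) (auto intro!: mult_pos_pos)
      then show "min 1 (N / real d ^ 2) \<le> N * (1 / (real d * (real d - 1)))" by simp
    qed simp
    also have "\<dots> = real s + N * (1 / real s - 1 / real n)"
      using telescope_sq[of s n] s1 False by (simp only: sum_distrib_left[symmetric]) simp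
    also have "\<dots> \<le> real s + N / real s"
      using assms by (simp add: algebra_simps)
    also have "\<dots> \<le> 2 * sqrt N + 1" using sN Ns by linarith
    finally show ?thesis .
  qed
qed

lemma sqrt_step:
  assumes "1 \<le> n"
  shows "1 / (real (Suc n) * sqrt (real (Suc n))) \<le> 2 / sqrt (real n) - 2 / sqrt (real (Suc n))"
proof -
  define a where "a = sqrt (real n)"
  define b where "b = sqrt (real (Suc n))"
  have a0: "0 < a" unfolding a_def using assms by simp
  have ab: "a < b" unfolding a_def b_def by simp
  have bb: "b * b = a * a + 1" unfolding a_def b_def by simp
  have "b - a = 1 / (a + b)" using bb a0 ab by (simp add: field_simps)
  have "1 / (b*b*b) \<le> 2 / a - 2 / b"
  proof -
    have "2 / a - 2 / b = 2 * (b - a) / (a * b)" using a0 ab by (simp add: field_simps)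
    also have "\<dots> = 2 * (1 / (a + b)) / (a * b)" by (simp only: \<open>b - a = 1 / (a + b)\<close>)
    also have "\<dots> = 2 / (a * b * (a + b))" using a0 ab by (simp add: field_simps)
    finally have e: "2 / a - 2 / b = 2 / (a * b * (a + b))" .
    have "a * b * (a + b) \<le> b * b * (2 * b)" using a0 ab
      by (intro mult_mono) (auto intro: mult_mono)
    then have "2 / (b * b * (2 * b)) \<le> 2 / (a * b * (a + b))"
      using a0 ab by (intro divide_left_mono) auto
    then show ?thesis unfolding e using a0 ab by (simp add: field_simps)
  qed
  moreover have "real (Suc n) * sqrt (real (Suc n)) = b*b*b" unfolding b_def by simp
  ultimately show ?thesis unfolding a_def b_def by simp
qed

lemma sum_inv_pow32:
  shows "(\<Sum>d=1..n. 1 / (real d * sqrt (real d))) \<le> 3"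
proof -
  have I: "(\<Sum>d=1..n. 1 / (real d * sqrt (real d))) \<le> 3 - 2 / sqrt (real n)" if "1 \<le> n" for n
    using that
  proof (induction n rule: dec_induct)
    case base then show ?case by simp
  next
    case (step n)
    then show ?case using sqrt_step[of n] by simp
  qed
  have P: "0 \<le> 2 / sqrt (real n)" by simp
  show ?thesis
  proof (cases "n = 0")
    case False
    then have "(\<Sum>d=1..n. 1 / (real d * sqrt (real d))) \<le> 3 - 2 / sqrt (real n)"
      using I[of n] by simp
    then show ?thesis using P by linarith
  qed simp
qed

lemma min_le_sqrt: "0 \<le> (x::real) \<Longrightarrow> min 1 x \<le> sqrt x"
proof (cases "x \<le> 1")
  case True
  assume "0 \<le> x"
  then have "x * x \<le> x" using True by (simp add: mult_left_le)
  then have "x \<le> sqrt x" using \<open>0 \<le> x\<close> by (simp add: real_le_rsqrt power2_eq_square)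
  then show ?thesis by simp
next
  case False then show ?thesis by simp
qed

lemma jsum_bound:
  assumes "prime p" "0 \<le> N"
  shows "(\<Sum>j=2..K. min 1 (N / real p ^ j)) \<le> min 1 (N / real p ^ 2) + 4 * sqrt N * (1 / (real p * sqrt (real p)))"
proof -
  have p2: "2 \<le> real p" using prime_ge_2_nat[OF assms(1)] by simp
  define r where "r = 1 / sqrt (real p)"
  have r0: "0 < r" unfolding r_def using p2 by simp
  have "sqrt 2 \<le> sqrt (real p)" using p2 by simp
  moreover have "4/3 < sqrt (2::real)" by (rule real_less_rsqrt) (simp add: power2_eq_square)
  ultimately have "4/3 < sqrt (real p)" by linarith
  then have "r \<le> 1 / (4/3)" unfolding r_def using p2 by (intro divide_left_mono) auto
  then have r34: "r \<le> 3/4" by simp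
  have r3: "r ^ 3 = 1 / (real p * sqrt (real p))"
    unfolding r_def using p2 by (simp add: power3_eq_cube power_divide)
  have T: "(\<Sum>j=3..K. min 1 (N / real p ^ j)) \<le> 4 * sqrt N * r ^ 3"
  proof -
    have "(\<Sum>j=3..K. min 1 (N / real p ^ j)) \<le> (\<Sum>j=3..K. sqrt N * r ^ j)"
    proof (intro sum_mono)
      fix j
      have "min 1 (N / real p ^ j) \<le> sqrt (N / real p ^ j)" using assms p2 by (intro min_le_sqrt) simp
      also have "\<dots> = sqrt N * r ^ j" unfolding r_def
        by (simp add: real_sqrt_divide real_sqrt_power power_divide)
      finally show "min 1 (N / real p ^ j) \<le> sqrt N * r ^ j" .
    qed
    also have "\<dots> = sqrt N * (\<Sum>j=3..K. r ^ j)" by (simp add: sum_distrib_left)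
    also have "(\<Sum>j=3..K. r ^ j) \<le> 4 * r ^ 3"
    proof (cases "K < 3")
      case True then show ?thesis using r0 by simp
    next
      case False
      have "(\<Sum>j=3..K. r ^ j) = (r ^ 3 - r ^ Suc K) / (1 - r)"
        using False r34 by (subst sum_gp) auto
      also have "\<dots> \<le> r ^ 3 / (1 - r)"
        using r0 r34 by (intro divide_right_mono) auto
      also have "\<dots> \<le> r ^ 3 / (1/4)"
        using r0 r34 by (intro divide_left_mono) auto
      finally show ?thesis by simp
    qed
    then have "sqrt N * (\<Sum>j=3..K. r ^ j) \<le> sqrt N * (4 * r ^ 3)"
      using assms(2) by (intro mult_left_mono) auto
    finally show ?thesis by simp
  qed
  show ?thesis
  proof (cases "K < 2")
    case True
    have "0 \<le> min 1 (N / real p ^ 2)" using assms by simp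
    moreover have "0 \<le> 4 * sqrt N * (1 / (real p * sqrt (real p)))" using assms p2 by simp
    ultimately show ?thesis using True by simp
  next
    case False
    then have "{2..K} = insert 2 {3..K}" by auto
    then have "(\<Sum>j=2..K. min 1 (N / real p ^ j)) = min 1 (N / real p ^ 2) + (\<Sum>j=3..K. min 1 (N / real p ^ j))"
      by simp
    then show ?thesis using T r3 by simp
  qed
qed

lemma S_bound:
  assumes "0 \<le> N"
  shows "(\<Sum>p\<in>{p. prime p \<and> p \<le> n}. ln (real p) * (\<Sum>j=2..K. min 1 (N / real p ^ j)))
         \<le> ln 4 * (2 * sqrt N + 1) + 12 * ln 4 * sqrt N"
proof -
  define g1 where "g1 = (\<lambda>d::nat. min 1 (N / real d ^ 2))"
  define g2 where "g2 = (\<lambda>d::nat. 1 / (real d * sqrt (real d)))"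
  have "(\<Sum>p\<in>{p. prime p \<and> p \<le> n}. ln (real p) * (\<Sum>j=2..K. min 1 (N / real p ^ j)))
        \<le> (\<Sum>p\<in>{p. prime p \<and> p \<le> n}. ln (real p) * g1 p + 4 * sqrt N * (ln (real p) * g2 p))"
  proof (intro sum_mono)
    fix p assume "p \<in> {p. prime p \<and> p \<le> n}"
    then have pp: "prime p" by simp
    have "0 \<le> ln (real p)" using prime_ge_1_nat[OF pp] by simp
    then have "ln (real p) * (\<Sum>j=2..K. min 1 (N / real p ^ j)) \<le> ln (real p) * (g1 p + 4 * sqrt N * g2 p)"
      using jsum_bound[OF pp assms, of K] unfolding g1_def g2_def by (intro mult_left_mono) auto
    then show "ln (real p) * (\<Sum>j=2..K. min 1 (N / real p ^ j)) \<le> ln (real p) * g1 p + 4 * sqrt N * (ln (real p) * g2 p)"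
      by (simp add: algebra_simps)
  qed
  also have "\<dots> = (\<Sum>p\<in>{p. prime p \<and> p \<le> n}. ln (real p) * g1 p) + 4 * sqrt N * (\<Sum>p\<in>{p. prime p \<and> p \<le> n}. ln (real p) * g2 p)"
    by (simp add: sum.distrib sum_distrib_left)
  also have "\<dots> \<le> ln 4 * (\<Sum>d=1..n. g1 d) + 4 * sqrt N * (ln 4 * (\<Sum>d=1..n. g2 d))"
  proof (intro add_mono mult_left_mono prime_sum_bound)
    show "0 \<le> g1 d" for d unfolding g1_def using assms by simp
    show "0 \<le> g2 d" for d unfolding g2_def by simp
    show "g1 e \<le> g1 d" if "1 \<le> d" "d \<le> e" for d e
    proof -
      have "real d ^ 2 \<le> real e ^ 2" using that by (intro power_mono) auto
      then have "N / real e ^ 2 \<le> N / real d ^ 2" using that assms by (intro divide_left_mono) auto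
      then show ?thesis unfolding g1_def by linarith
    qed
    show "g2 e \<le> g2 d" if "1 \<le> d" "d \<le> e" for d e
    proof -
      have "real d * sqrt (real d) \<le> real e * sqrt (real e)" using that by (intro mult_mono) auto
      then show ?thesis unfolding g2_def using that by (intro divide_left_mono) auto
    qed
  qed (use assms in auto)
  also have "\<dots> \<le> ln 4 * (2 * sqrt N + 1) + 4 * sqrt N * (ln 4 * 3)"
    using sum_min_sq[OF assms, of n] sum_inv_pow32[of n] assms unfolding g1_def g2_def
    by (intro add_mono mult_left_mono) auto
  finally show ?thesis by (simp add: mult_ac)
qed

definition Fbound :: "nat \<Rightarrow> (nat \<Rightarrow> 'a \<Rightarrow> nat) \<Rightarrow> nat \<Rightarrow> 'a \<Rightarrow> real" where
  "Fbound n V N \<omega> = (\<Sum>p\<in>{p. prime p \<and> p \<le> n}. ln (real p) *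
      (\<Sum>j=2..n. (if \<exists>k\<in>{1..N}. p ^ j dvd V k \<omega> then 1 else 0)))"

lemma D_zero: "lcmY V 0 \<omega> - primeZ n V 0 \<omega> = 0"
  unfolding lcmY_def primeZ_def by simp

lemma Fbound_nonneg: "0 \<le> Fbound n V N \<omega>"
  unfolding Fbound_def
  by (intro sum_nonneg mult_nonneg_nonneg) (auto dest!: prime_ge_1_nat)

lemma D_le_F:
  assumes rng: "\<And>k. k \<in> {1..N} \<Longrightarrow> V k \<omega> \<in> {1..n}" and NN: "N' \<le> N"
  shows "lcmY V N' \<omega> - primeZ n V N' \<omega> \<le> Fbound n V N \<omega>"
proof -
  define Pn where "Pn = {p::nat. prime p \<and> p \<le> n}"
  have finPn: "finite Pn" unfolding Pn_def by simp
  define e where "e = (\<lambda>p. Max (insert 0 ((\<lambda>k. multiplicity p (V k \<omega>)) ` {1..N'})))"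
  define X where "X = (\<Prod>p\<in>Pn. p ^ e p)"
  have X0: "X > 0" unfolding X_def Pn_def by (intro prod_pos) (auto dest!: prime_gt_0_nat)
  have multX: "multiplicity q X = (if q \<in> Pn then e q else 0)" if "prime q" for q
    unfolding X_def by (rule multiplicity_prod_prime_powers) (use finPn that in \<open>auto simp: Pn_def\<close>)
  have dvdX: "V k \<omega> dvd X" if k: "k \<in> {1..N'}" for k
  proof (rule multiplicity_le_imp_dvd)
    have r: "V k \<omega> \<in> {1..n}" using rng k NN by auto
    then show "V k \<omega> \<noteq> 0" by auto
    fix q :: nat assume q: "prime q"
    show "multiplicity q (V k \<omega>) \<le> multiplicity q X"
    proof (cases "q \<in> Pn")
      case True
      then show ?thesis unfolding multX[OF q] using True k unfolding e_def
        by (simp add: Max_ge)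
    next
      case False
      then have "n < q" using q unfolding Pn_def by auto
      then have "\<not> q dvd V k \<omega>" using r by (auto dest: dvd_imp_le)
      then show ?thesis by (simp add: not_dvd_imp_multiplicity_0)
    qed
  qed
  define L where "L = Lcm ((\<lambda>k. V k \<omega>) ` {1..N'})"
  have "L dvd X" unfolding L_def by (rule Lcm_least) (use dvdX in auto)
  then have L0: "L > 0" "L \<le> X" using X0 by (auto intro: dvd_imp_le dvd_pos_nat)
  have "lcmY V N' \<omega> = ln (real L)" unfolding lcmY_def L_def by simp
  also have "\<dots> \<le> ln (real X)" using L0 by simp
  also have "\<dots> = (\<Sum>p\<in>Pn. real (e p) * ln (real p))"
    unfolding X_def using finPn
    by (subst of_nat_prod, subst ln_prod) (auto simp: Pn_def ln_realpow dest!: prime_gt_0_nat)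
  finally have Y: "lcmY V N' \<omega> \<le> (\<Sum>p\<in>Pn. real (e p) * ln (real p))" .
  have Z: "primeZ n V N' \<omega> = (\<Sum>p\<in>Pn. ln (real p) * (if e p \<ge> 1 then 1 else 0))"
    unfolding primeZ_def Pn_def e_def by simp
  have key: "real (e p) - (if e p \<ge> 1 then 1 else 0) \<le> (\<Sum>j=2..n. (if \<exists>k\<in>{1..N}. p ^ j dvd V k \<omega> then 1 else 0))"
    if p: "p \<in> Pn" for p
  proof (cases "e p = 0")
    case True then show ?thesis by (simp add: sum_nonneg)
  next
    case False
    have fin: "finite (insert 0 ((\<lambda>k. multiplicity p (V k \<omega>)) ` {1..N'}))" by simp
    have "e p \<in> insert 0 ((\<lambda>k. multiplicity p (V k \<omega>)) ` {1..N'})"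
      unfolding e_def by (rule Max_in[OF fin]) simp
    then obtain k where k: "k \<in> {1..N'}" "e p = multiplicity p (V k \<omega>)" using False by auto
    have r: "V k \<omega> \<in> {1..n}" using rng k NN by auto
    have pp: "prime p" using p unfolding Pn_def by simp
    have pe: "p ^ e p dvd V k \<omega>" using k(2) multiplicity_dvd by metis
    have "p ^ e p \<le> n" using pe r dvd_imp_le by (meson atLeastAtMost_iff le_trans less_le_trans zero_less_one)
    moreover have "e p < 2 ^ e p" by (rule less_exp)
    moreover have "2 ^ e p \<le> p ^ e p" using prime_ge_2_nat[OF pp] by (simp add: power_mono)
    ultimately have en: "e p \<le> n" by linarith
    have "(\<Sum>j=2..e p. (1::real)) \<le> (\<Sum>j=2..e p. (if \<exists>k\<in>{1..N}. p ^ j dvd V k \<omega> then 1 else 0))"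
    proof (intro sum_mono)
      fix j assume j: "j \<in> {2..e p}"
      have "p ^ j dvd V k \<omega>" using pe j by (meson atLeastAtMost_iff dvd_trans le_imp_power_dvd)
      then show "(1::real) \<le> (if \<exists>k\<in>{1..N}. p ^ j dvd V k \<omega> then 1 else 0)" using k NN by auto
    qed
    also have "\<dots> \<le> (\<Sum>j=2..n. (if \<exists>k\<in>{1..N}. p ^ j dvd V k \<omega> then 1 else 0))"
      by (rule sum_mono2) (use en in auto)
    finally show ?thesis using False by simp
  qed
  have "lcmY V N' \<omega> - primeZ n V N' \<omega> \<le> (\<Sum>p\<in>Pn. real (e p) * ln (real p)) - (\<Sum>p\<in>Pn. ln (real p) * (if e p \<ge> 1 then 1 else 0))"
    using Y Z by simp
  also have "\<dots> = (\<Sum>p\<in>Pn. ln (real p) * (real (e p) - (if e p \<ge> 1 then 1 else 0)))"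
    by (simp add: sum_subtractf algebra_simps)
  also have "\<dots> \<le> (\<Sum>p\<in>Pn. ln (real p) * (\<Sum>j=2..n. (if \<exists>k\<in>{1..N}. p ^ j dvd V k \<omega> then 1 else 0)))"
    by (intro sum_mono mult_left_mono key) (auto simp: Pn_def dest!: prime_ge_1_nat)
  also have "\<dots> = Fbound n V N \<omega>" unfolding Fbound_def Pn_def ..
  finally show ?thesis .
qed

lemma card_multiples: "0 < q \<Longrightarrow> real (card {x\<in>{1..n::nat}. q dvd x}) * real q \<le> real n"
proof -
  assume q: "0 < q"
  have "{x\<in>{1..n::nat}. q dvd x} \<subseteq> (\<lambda>i. q * i) ` {1..n div q}"
  proof
    fix x assume x: "x \<in> {x\<in>{1..n::nat}. q dvd x}"
    then obtain i where i: "x = q * i" by auto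
    then have "1 \<le> i" using x by (cases i) auto
    moreover have "i \<le> n div q"
    proof -
      have "i = (q*i) div q" using q by simp
      also have "\<dots> \<le> n div q" using x i by (intro div_le_mono) auto
      finally show ?thesis .
    qed
    ultimately show "x \<in> (\<lambda>i. q * i) ` {1..n div q}" using i by auto
  qed
  then have "card {x\<in>{1..n::nat}. q dvd x} \<le> card ((\<lambda>i. q * i) ` {1..n div q})"
    by (intro card_mono) auto
  also have "\<dots> \<le> card {1..n div q}" by (rule card_image_le) simp
  also have "\<dots> = n div q" by simp
  finally have "card {x\<in>{1..n::nat}. q dvd x} * q \<le> n div q * q" by simp
  also have "\<dots> \<le> n" by simp
  finally show ?thesis by (simp only: of_nat_mult[symmetric] of_nat_le_iff)
qed

lemma prob_dvd_le:
  assumes "prob_space M" "1 \<le> n" "0 < q"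
    and meas: "V \<in> measurable M (count_space UNIV)"
    and dist: "distr M (count_space UNIV) V = measure_pmf (pmf_of_set {1..n})"
  shows "measure M {\<omega>\<in>space M. q dvd V \<omega>} \<le> 1 / real q"
proof -
  have "{\<omega>\<in>space M. q dvd V \<omega>} = V -` {x. q dvd x} \<inter> space M" by auto
  then have "measure M {\<omega>\<in>space M. q dvd V \<omega>} = measure (distr M (count_space UNIV) V) {x. q dvd x}"
    using meas by (simp add: measure_distr)
  also have "\<dots> = real (card ({1..n} \<inter> {x. q dvd x})) / real (card {1..n})"
    unfolding dist by (rule measure_pmf_of_set) (use assms in auto)
  also have "\<dots> = real (card {x\<in>{1..n}. q dvd x}) / real n" by (simp add: Int_def)
  also have "\<dots> \<le> 1 / real q"
    using card_multiples[OF assms(3), of n] assms by (simp add: field_simps)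
  finally show ?thesis .
qed

lemma expect_F:
  assumes "prob_space M" "1 \<le> n"
    and meas: "\<And>k. 1 \<le> k \<Longrightarrow> V k \<in> measurable M (count_space UNIV)"
    and dist: "\<And>k. 1 \<le> k \<Longrightarrow> distr M (count_space UNIV) (V k) = measure_pmf (pmf_of_set {1..n})"
  shows "integrable M (Fbound n V N)"
    "integral\<^sup>L M (Fbound n V N) \<le> ln 4 * (2 * sqrt (real N) + 1) + 12 * ln 4 * sqrt (real N)"
proof -
  interpret prob_space M by (rule assms(1))
  define E where "E = (\<lambda>p j. {\<omega>\<in>space M. \<exists>k\<in>{1..N}. (p::nat) ^ j dvd V k \<omega>})"
  have Ek: "{\<omega>\<in>space M. q dvd V k \<omega>} \<in> sets M" if "1 \<le> k" for q k
  proof -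
    have "{\<omega>\<in>space M. q dvd V k \<omega>} = V k -` {x. q dvd x} \<inter> space M" by auto
    then show ?thesis using measurable_sets[OF meas[OF that], of "{x. q dvd x}"] by simp
  qed
  have Eu: "E p j = (\<Union>k\<in>{1..N}. {\<omega>\<in>space M. p ^ j dvd V k \<omega>})" for p j
    unfolding E_def by auto
  have Es: "E p j \<in> sets M" for p j
    unfolding Eu using Ek by (intro sets.finite_UN) auto
  define G where "G = (\<lambda>\<omega>. \<Sum>p\<in>{p. prime p \<and> p \<le> n}. \<Sum>j=2..n. ln (real p) * indicator (E p j) \<omega> :: real)"
  have FG: "Fbound n V N \<omega> = G \<omega>" if "\<omega> \<in> space M" for \<omega>
    unfolding Fbound_def G_def sum_distrib_left
    by (intro sum.cong refl) (simp add: E_def indicator_def that)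
  have intG: "integrable M G"
    unfolding G_def by (intro Bochner_Integration.integrable_sum Bochner_Integration.integrable_mult_right) (use Es in \<open>auto simp: emeasure_eq_measure\<close>)
  show "integrable M (Fbound n V N)"
    using intG FG by (subst Bochner_Integration.integrable_cong[OF refl FG]) auto
  have "integral\<^sup>L M (Fbound n V N) = integral\<^sup>L M G" by (rule Bochner_Integration.integral_cong[OF refl FG])
  also have "\<dots> = (\<Sum>p\<in>{p. prime p \<and> p \<le> n}. \<Sum>j=2..n. ln (real p) * prob (E p j))"
    unfolding G_def using Es
    by (subst Bochner_Integration.integral_sum, fastforce intro!: Bochner_Integration.integrable_sum Bochner_Integration.integrable_mult_right simp: emeasure_eq_measure)
       (subst Bochner_Integration.integral_sum, auto intro!: sum.cong simp: Int_absorb2 sets.sets_into_space emeasure_eq_measure)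
  also have "\<dots> \<le> (\<Sum>p\<in>{p. prime p \<and> p \<le> n}. ln (real p) * (\<Sum>j=2..n. min 1 (real N / real p ^ j)))"
  proof (intro sum_mono, unfold sum_distrib_left, intro sum_mono mult_left_mono)
    fix p j assume p: "p \<in> {p. prime p \<and> p \<le> n}"
    then show "0 \<le> ln (real p)" by (auto dest!: prime_ge_1_nat)
    have p0: "0 < p ^ j" using p by (auto dest!: prime_gt_0_nat)
    have "prob (E p j) \<le> (\<Sum>k\<in>{1..N}. prob {\<omega>\<in>space M. p ^ j dvd V k \<omega>})"
      unfolding Eu using Ek by (intro finite_measure_subadditive_finite) auto
    also have "\<dots> \<le> (\<Sum>k\<in>{1..N}. 1 / real (p ^ j))"
      by (intro sum_mono prob_dvd_le[OF assms(1,2) p0 meas dist]) auto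
    also have "\<dots> = real N / real p ^ j" by simp
    finally show "prob (E p j) \<le> min 1 (real N / real p ^ j)" by simp
  qed
  also have "\<dots> \<le> ln 4 * (2 * sqrt (real N) + 1) + 12 * ln 4 * sqrt (real N)"
    by (rule S_bound) simp
  finally show "integral\<^sup>L M (Fbound n V N) \<le> ln 4 * (2 * sqrt (real N) + 1) + 12 * ln 4 * sqrt (real N)" .
qed

theorem lemma6p1:
  fixes M :: "'a measure" and U :: "nat \<Rightarrow> nat \<Rightarrow> 'a \<Rightarrow> nat"
    and m :: "nat \<Rightarrow> real" and T :: real
  assumes "prob_space M"
    and "\<And>n. n \<ge> 1 \<Longrightarrow> prob_space.indep_vars M (\<lambda>_. count_space UNIV) (U n) {1..}"
    and "\<And>n k. n \<ge> 1 \<Longrightarrow> k \<ge> 1 \<Longrightarrow>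
           distr M (count_space UNIV) (U n k) = measure_pmf (pmf_of_set {1..n})"
    and "filterlim m at_top sequentially"
    and "m \<in> o(\<lambda>n. real n)"
    and "T > 0"
  shows "(\<lambda>n. prob_space.expectation M (\<lambda>\<omega>.
            SUP t\<in>{0..T}. lcmY (U n) (nat \<lfloor>m n * t\<rfloor>) \<omega> - primeZ n (U n) (nat \<lfloor>m n * t\<rfloor>) \<omega>))
         \<in> O(\<lambda>n. sqrt (m n))"
proof -
  interpret P: prob_space M by (rule assms(1))
  define B where "B = (\<lambda>N::nat. ln 4 * (2 * sqrt (real N) + 1) + 12 * ln 4 * sqrt (real N))"
  have main: "\<bar>integral\<^sup>L M (\<lambda>\<omega>. SUP t\<in>{0..T}. lcmY (U n) (nat \<lfloor>m n * t\<rfloor>) \<omega> - primeZ n (U n) (nat \<lfloor>m n * t\<rfloor>) \<omega>)\<bar>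
      \<le> B (nat \<lfloor>m n * T\<rfloor>)" if n1: "1 \<le> n" and mpos: "0 < m n" for n
  proof -
    define N where "N = nat \<lfloor>m n * T\<rfloor>"
    define f where "f = (\<lambda>\<omega>. SUP t\<in>{0..T}. lcmY (U n) (nat \<lfloor>m n * t\<rfloor>) \<omega> - primeZ n (U n) (nat \<lfloor>m n * t\<rfloor>) \<omega>)"
    have meas: "U n k \<in> measurable M (count_space UNIV)" if "1 \<le> k" for k
      using assms(2)[OF n1] that unfolding P.indep_vars_def by auto
    have dist: "distr M (count_space UNIV) (U n k) = measure_pmf (pmf_of_set {1..n})" if "1 \<le> k" for k
      using assms(3)[OF n1 that] .
    have AEk: "AE \<omega> in M. U n k \<omega> \<in> {1..n}" if "1 \<le> k" for k
    proof -
      have "AE x in distr M (count_space UNIV) (U n k). x \<in> {1..n}"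
        unfolding dist[OF that] using n1 by (simp add: AE_measure_pmf_iff)
      then show ?thesis using AE_distr_iff[OF meas[OF that], of "\<lambda>x. x \<in> {1..n}"] by simp
    qed
    have AEall: "AE \<omega> in M. \<forall>k\<in>{1..N}. U n k \<omega> \<in> {1..n}"
      using AEk by (subst AE_finite_all) auto
    have AEf: "AE \<omega> in M. 0 \<le> f \<omega> \<and> f \<omega> \<le> Fbound n (U n) N \<omega>"
      using AEall
    proof (rule AE_mp, intro AE_I2 impI)
      fix \<omega> assume rng: "\<forall>k\<in>{1..N}. U n k \<omega> \<in> {1..n}"
      have le: "lcmY (U n) (nat \<lfloor>m n * t\<rfloor>) \<omega> - primeZ n (U n) (nat \<lfloor>m n * t\<rfloor>) \<omega> \<le> Fbound n (U n) N \<omega>"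
        if t: "t \<in> {0..T}" for t
      proof (rule D_le_F)
        show "U n k \<omega> \<in> {1..n}" if "k \<in> {1..N}" for k using rng that by auto
        have "m n * t \<le> m n * T" using t mpos by (intro mult_left_mono) auto
        then show "nat \<lfloor>m n * t\<rfloor> \<le> N" unfolding N_def by (intro nat_mono floor_mono)
      qed
      have bdd: "bdd_above ((\<lambda>t. lcmY (U n) (nat \<lfloor>m n * t\<rfloor>) \<omega> - primeZ n (U n) (nat \<lfloor>m n * t\<rfloor>) \<omega>) ` {0..T})"
        using le by (intro bdd_aboveI2) auto
      have "lcmY (U n) (nat \<lfloor>m n * 0\<rfloor>) \<omega> - primeZ n (U n) (nat \<lfloor>m n * 0\<rfloor>) \<omega> \<le> f \<omega>"
        unfolding f_def using assms(6) by (intro cSUP_upper[OF _ bdd]) auto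
      then have "0 \<le> f \<omega>" using D_zero[of "U n" \<omega> n] by simp
      moreover have "f \<omega> \<le> Fbound n (U n) N \<omega>"
        unfolding f_def using assms(6) le by (intro cSUP_least) auto
      ultimately show "0 \<le> f \<omega> \<and> f \<omega> \<le> Fbound n (U n) N \<omega>" by simp
    qed
    have intF: "integrable M (Fbound n (U n) N)" and EF: "integral\<^sup>L M (Fbound n (U n) N) \<le> B N"
      using expect_F[OF assms(1) n1 meas dist, where N=N] unfolding B_def by auto
    have I0: "0 \<le> integral\<^sup>L M f" using AEf by (intro integral_nonneg_AE) auto
    have I1: "integral\<^sup>L M f \<le> integral\<^sup>L M (Fbound n (U n) N)"
    proof (cases "integrable M f")
      case True
      then show ?thesis using intF AEf by (intro integral_mono_AE) auto
    next
      case False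
      then have "integral\<^sup>L M f = 0" by (rule not_integrable_integral_eq)
      moreover have "0 \<le> integral\<^sup>L M (Fbound n (U n) N)" by (intro integral_nonneg_AE) (simp add: Fbound_nonneg)
      ultimately show ?thesis by simp
    qed
    show ?thesis using I0 I1 EF unfolding f_def N_def by simp
  qed
  define C where "C = 14 * ln 4 * sqrt T + ln (4::real)"
  have ev: "eventually (\<lambda>n. 1 \<le> m n \<and> 1 \<le> n) sequentially"
    using assms(4) unfolding filterlim_at_top by (intro eventually_conj) (auto simp: eventually_ge_at_top)
  show ?thesis
  proof (rule bigoI[where c = C], rule eventually_mono[OF ev])
    fix n assume n: "1 \<le> m n \<and> 1 \<le> n"
    let ?E = "integral\<^sup>L M (\<lambda>\<omega>. SUP t\<in>{0..T}. lcmY (U n) (nat \<lfloor>m n * t\<rfloor>) \<omega> - primeZ n (U n) (nat \<lfloor>m n * t\<rfloor>) \<omega>)"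
    define N where "N = nat \<lfloor>m n * T\<rfloor>"
    have x0: "0 \<le> m n * T" using n assms(6) by simp
    have "real N = real_of_int \<lfloor>m n * T\<rfloor>" unfolding N_def using x0 by simp
    then have "real N \<le> m n * T" using of_int_floor_le[of "m n * T"] by linarith
    then have "sqrt (real N) \<le> sqrt (m n * T)" by simp
    also have "\<dots> = sqrt (m n) * sqrt T" by (simp add: real_sqrt_mult)
    finally have sN: "sqrt (real N) \<le> sqrt (m n) * sqrt T" .
    have sm: "1 \<le> sqrt (m n)" using n by simp
    have l4: "0 < ln (4::real)" by simp
    have "\<bar>?E\<bar> \<le> B N" using main[of n] n unfolding N_def by simp
    also have "B N = 14 * ln 4 * sqrt (real N) + ln 4" unfolding B_def by (simp add: algebra_simps)
    also have "\<dots> \<le> 14 * ln 4 * (sqrt (m n) * sqrt T) + ln 4 * sqrt (m n)"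
      using sN sm l4 by (intro add_mono mult_left_mono) auto
    also have "\<dots> = C * sqrt (m n)" unfolding C_def by (simp add: algebra_simps)
    finally show "norm ?E \<le> C * norm (sqrt (m n))" using sm by simp
  qed
qed

end
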